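(* Consider, for known parameters $\boldsymbol\theta$ as in the context, the optimization problem in the prices $\mathbf p=(p_{ij})_{i\neq j}$: $$\max\ \sum_{i\in\mathcal N}\sum_{j\neq i}\xi_{ij}(\alpha_{ij}-\beta_{ij}p_{ij}+\epsilon_{ij}^-)p_{ij}-\sum_{i\in\mathcal N}\sum_{j\neq i}\xi_{ij}(\alpha_{ij}-\beta_{ij}p_{ij})c$$ subject to $\sum_{j\neq i}(\alpha_{ij}-\beta_{ij}p_{ij})=\sum_{j\neq i}(\alpha_{ji}-\beta_{ji}p_{ji})$ for all $i\in\mathcal N$, and $p_{ij}\le p_{\max}$ for all $i\neq j$. Let $\mathbf p^*(\boldsymbol\theta)$ be its optimal solution and $\mu_{ij}^*$ the optimal dual variable associated with the constraint $p_{ij}\le p_{\max}$. If $\mu_{ij}^*=0$ for all $(i,j)$, then for every link $(i,j)$, $$p_{ij}^*(\boldsymbol\theta)=\frac{c\beta_{ij}+\alpha_{ij}+\epsilon_{ij}^-}{2\beta_{ij}}+\frac{1}{4\xi_{ij}}\sum_{k\in\mathcal N}\big(R_{jk}(\boldsymbol\beta)-R_{ik}(\boldsymbol\beta)\big)v_k(\boldsymbol\theta),$$ where $v_k(\boldsymbol\theta)=\sum_{j\neq k}(\alpha_{kj}-c\beta_{kj}-\epsilon_{kj}^-)-\sum_{j\neq k}(\alpha_{jk}-c\beta_{jk}-\epsilon_{jk}^-)$.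
   Context: Locations $\mathcal N=\{1,\dots,N\}$. For each ordered pair $(i,j)$, $i\neq j$: parameters $\alpha_{ij}>0$, $\beta_{ij}>0$ (collected in $\boldsymbol\theta$, with $\boldsymbol\beta=(\beta_{ij})_{i\neq j}$), travel time $\xi_{ij}>0$, and a random demand shock $\epsilon_{ij}$ supported in $[\underline\epsilon,\overline\epsilon]$ with c.d.f. $F_{ij}$ and mean zero; $\epsilon_{ij}^-:=\int_{\underline\epsilon}^{0}x\,dF_{ij}(x)$ (a nonpositive number). $c>0$ is a per-slot vehicle cost and $p_{\max}>c$ a maximum price. Effective resistances: form the resistor network on nodes $\mathcal N$ in which, for each $i<j$, nodes $i$ and $j$ are joined by a resistor of resistance $r_{ij}=1/(\beta_{ij}/\xi_{ij}+\beta_{ji}/\xi_{ji})$. $R_{ij}(\boldsymbol\beta)$ denotes the effective resistance between nodes $i$ and $j$ in this network, i.e. the voltage between $i$ and $j$ when a unit current is injected at $i$ and extracted at $j$ (with $R_{ii}(\boldsymbol\beta)=0$). *)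

theory Defs
  imports "HOL-Probability.Probability"
begin

text \<open>Locations are the nodes 1..N; links are ordered pairs (i,j) of distinct nodes.
  Prices, parameters etc. are functions nat => nat => real, only their values on links matter.\<close>

definition nodes :: "nat \<Rightarrow> nat set" where
  "nodes N = {1..N}"

definition eps_minus :: "real measure \<Rightarrow> real \<Rightarrow> real" where
  "eps_minus F lo = (LINT x:{lo..0}|F. x)"

text \<open>Effective resistance between nodes i and j of a resistor network on node set V with
  conductances g k l (=1/resistance): the voltage u i - u j, where u is a node potential
  under which a unit current is injected at i and extracted at j (Kirchhoff's current law).\<close>
definition eff_res :: "nat set \<Rightarrow> (nat \<Rightarrow> nat \<Rightarrow> real) \<Rightarrow> nat \<Rightarrow> nat \<Rightarrow> real" where
  "eff_res V g i j = (THE r. \<exists>u :: nat \<Rightarrow> real.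
      (\<forall>k\<in>V. (\<Sum>l\<in>V-{k}. g k l * (u k - u l)) =
                 (if k = i then 1 else 0) - (if k = j then 1 else 0))
      \<and> r = u i - u j)"

text \<open>Conductance 1/r_ij of the resistor joining i and j, where r_ij = 1/(beta_ij/xi_ij + beta_ji/xi_ji).\<close>
definition res_net :: "(nat \<Rightarrow> nat \<Rightarrow> real) \<Rightarrow> (nat \<Rightarrow> nat \<Rightarrow> real) \<Rightarrow> nat \<Rightarrow> nat \<Rightarrow> real" where
  "res_net \<beta> \<xi> i j = 1 / (1 / (\<beta> i j / \<xi> i j + \<beta> j i / \<xi> j i))"

definition R_eff :: "nat \<Rightarrow> (nat \<Rightarrow> nat \<Rightarrow> real) \<Rightarrow> (nat \<Rightarrow> nat \<Rightarrow> real) \<Rightarrow> nat \<Rightarrow> nat \<Rightarrow> real" where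
  "R_eff N \<beta> \<xi> = eff_res (nodes N) (res_net \<beta> \<xi>)"

definition objective :: "nat \<Rightarrow> (nat \<Rightarrow> nat \<Rightarrow> real) \<Rightarrow> (nat \<Rightarrow> nat \<Rightarrow> real) \<Rightarrow> (nat \<Rightarrow> nat \<Rightarrow> real)
    \<Rightarrow> (nat \<Rightarrow> nat \<Rightarrow> real) \<Rightarrow> real \<Rightarrow> (nat \<Rightarrow> nat \<Rightarrow> real) \<Rightarrow> real" where
  "objective N \<alpha> \<beta> \<xi> em c p =
     (\<Sum>i\<in>nodes N. \<Sum>j\<in>nodes N - {i}. \<xi> i j * (\<alpha> i j - \<beta> i j * p i j + em i j) * p i j)
   - (\<Sum>i\<in>nodes N. \<Sum>j\<in>nodes N - {i}. \<xi> i j * (\<alpha> i j - \<beta> i j * p i j) * c)"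

definition balance :: "nat \<Rightarrow> (nat \<Rightarrow> nat \<Rightarrow> real) \<Rightarrow> (nat \<Rightarrow> nat \<Rightarrow> real)
    \<Rightarrow> (nat \<Rightarrow> nat \<Rightarrow> real) \<Rightarrow> nat \<Rightarrow> real" where
  "balance N \<alpha> \<beta> p i =
     (\<Sum>j\<in>nodes N - {i}. \<alpha> i j - \<beta> i j * p i j) - (\<Sum>j\<in>nodes N - {i}. \<alpha> j i - \<beta> j i * p j i)"

definition feasible :: "nat \<Rightarrow> (nat \<Rightarrow> nat \<Rightarrow> real) \<Rightarrow> (nat \<Rightarrow> nat \<Rightarrow> real) \<Rightarrow> real
    \<Rightarrow> (nat \<Rightarrow> nat \<Rightarrow> real) \<Rightarrow> bool" where
  "feasible N \<alpha> \<beta> pmax p \<longleftrightarrow>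
     (\<forall>i\<in>nodes N. balance N \<alpha> \<beta> p i = 0) \<and>
     (\<forall>i\<in>nodes N. \<forall>j\<in>nodes N. i \<noteq> j \<longrightarrow> p i j \<le> pmax)"

definition primal_optimal where
  "primal_optimal N \<alpha> \<beta> \<xi> em c pmax p \<longleftrightarrow>
     feasible N \<alpha> \<beta> pmax p \<and>
     (\<forall>q. feasible N \<alpha> \<beta> pmax q \<longrightarrow> objective N \<alpha> \<beta> \<xi> em c q \<le> objective N \<alpha> \<beta> \<xi> em c p)"

definition lagrangian where
  "lagrangian N \<alpha> \<beta> \<xi> em c pmax p (lam :: nat \<Rightarrow> real) (mu :: nat \<Rightarrow> nat \<Rightarrow> real) =
     objective N \<alpha> \<beta> \<xi> em c p
     + (\<Sum>i\<in>nodes N. lam i * balance N \<alpha> \<beta> p i)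
     + (\<Sum>i\<in>nodes N. \<Sum>j\<in>nodes N - {i}. mu i j * (pmax - p i j))"

definition dual_fun where
  "dual_fun N \<alpha> \<beta> \<xi> em c pmax lam mu =
     (SUP p. lagrangian N \<alpha> \<beta> \<xi> em c pmax p lam mu)"

definition dual_feasible :: "nat \<Rightarrow> (nat \<Rightarrow> nat \<Rightarrow> real) \<Rightarrow> bool" where
  "dual_feasible N mu \<longleftrightarrow> (\<forall>i\<in>nodes N. \<forall>j\<in>nodes N. i \<noteq> j \<longrightarrow> 0 \<le> mu i j)"

definition dual_optimal where
  "dual_optimal N \<alpha> \<beta> \<xi> em c pmax lam mu \<longleftrightarrow>
     dual_feasible N mu \<and>
     (\<forall>lam' mu'. dual_feasible N mu' \<longrightarrow>
        dual_fun N \<alpha> \<beta> \<xi> em c pmax lam mu \<le> dual_fun N \<alpha> \<beta> \<xi> em c pmax lam' mu')"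

end

theory Submission
  imports Defs
begin


lemma offdiag_swap:
  assumes "finite V"
  shows "(\<Sum>i\<in>V. \<Sum>j\<in>V - {i}. f i j) = (\<Sum>i\<in>V. \<Sum>j\<in>V - {i}. f j i)"
proof -
  have e: "\<And>i. V - {i} = {j. j \<in> V \<and> i \<noteq> j}" "\<And>i. V - {i} = {j. j \<in> V \<and> j \<noteq> i}" by auto
  have "(\<Sum>i\<in>V. \<Sum>j\<in>{j. j \<in> V \<and> i \<noteq> j}. f i j) = (\<Sum>j\<in>V. \<Sum>i\<in>{i. i \<in> V \<and> i \<noteq> j}. f i j)"
    by (rule sum.swap_restrict[OF assms assms])
  then show ?thesis using e by simp
qed

definition phi :: "(nat \<Rightarrow> nat \<Rightarrow> real) \<Rightarrow> (nat \<Rightarrow> nat \<Rightarrow> real) \<Rightarrow> (nat \<Rightarrow> nat \<Rightarrow> real) \<Rightarrow> (nat \<Rightarrow> nat \<Rightarrow> real)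
   \<Rightarrow> real \<Rightarrow> real \<Rightarrow> (nat \<Rightarrow> real) \<Rightarrow> (nat \<Rightarrow> nat \<Rightarrow> real) \<Rightarrow> nat \<Rightarrow> nat \<Rightarrow> real \<Rightarrow> real" where
  "phi \<alpha> \<beta> \<xi> em c pmax lam mu i j y =
     \<xi> i j * (\<alpha> i j - \<beta> i j * y + em i j) * y - \<xi> i j * (\<alpha> i j - \<beta> i j * y) * c
     + (lam i * (\<alpha> i j - \<beta> i j * y) - lam j * (\<alpha> i j - \<beta> i j * y)) + mu i j * (pmax - y)"

definition qf :: "(nat \<Rightarrow> nat \<Rightarrow> real) \<Rightarrow> (nat \<Rightarrow> nat \<Rightarrow> real) \<Rightarrow> (nat \<Rightarrow> nat \<Rightarrow> real) \<Rightarrow> (nat \<Rightarrow> nat \<Rightarrow> real)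
   \<Rightarrow> real \<Rightarrow> (nat \<Rightarrow> real) \<Rightarrow> (nat \<Rightarrow> nat \<Rightarrow> real) \<Rightarrow> nat \<Rightarrow> nat \<Rightarrow> real" where
  "qf \<alpha> \<beta> \<xi> em c lam mu i j =
     (\<xi> i j * \<alpha> i j + \<xi> i j * em i j + \<xi> i j * \<beta> i j * c - \<beta> i j * (lam i - lam j) - mu i j)
     / (2 * \<xi> i j * \<beta> i j)"

lemma L_sep:
  "lagrangian N \<alpha> \<beta> \<xi> em c pmax x lam mu =
   (\<Sum>i\<in>nodes N. \<Sum>j\<in>nodes N - {i}. phi \<alpha> \<beta> \<xi> em c pmax lam mu i j (x i j))"
proof -
  have fin: "finite (nodes N)" by (simp add: nodes_def)
  have sw: "(\<Sum>i\<in>nodes N. \<Sum>j\<in>nodes N - {i}. lam i * (\<alpha> j i - \<beta> j i * x j i))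
     = (\<Sum>i\<in>nodes N. \<Sum>j\<in>nodes N - {i}. lam j * (\<alpha> i j - \<beta> i j * x i j))"
    by (rule offdiag_swap[OF fin])
  have "(\<Sum>i\<in>nodes N. lam i * balance N \<alpha> \<beta> x i) =
     (\<Sum>i\<in>nodes N. \<Sum>j\<in>nodes N - {i}. lam i * (\<alpha> i j - \<beta> i j * x i j))
     - (\<Sum>i\<in>nodes N. \<Sum>j\<in>nodes N - {i}. lam i * (\<alpha> j i - \<beta> j i * x j i))"
    by (simp add: balance_def right_diff_distrib sum_distrib_left sum_subtractf)
  then have b: "(\<Sum>i\<in>nodes N. lam i * balance N \<alpha> \<beta> x i) =
     (\<Sum>i\<in>nodes N. \<Sum>j\<in>nodes N - {i}. lam i * (\<alpha> i j - \<beta> i j * x i j))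
     - (\<Sum>i\<in>nodes N. \<Sum>j\<in>nodes N - {i}. lam j * (\<alpha> i j - \<beta> i j * x i j))"
    using sw by simp
  show ?thesis
    unfolding lagrangian_def objective_def b phi_def
    by (simp only: sum.distrib sum_subtractf)
qed

lemma phi_quad:
  assumes "\<xi> i j > 0" "\<beta> i j > 0"
  shows "phi \<alpha> \<beta> \<xi> em c pmax lam mu i j y =
     phi \<alpha> \<beta> \<xi> em c pmax lam mu i j (qf \<alpha> \<beta> \<xi> em c lam mu i j)
     - \<xi> i j * \<beta> i j * (y - qf \<alpha> \<beta> \<xi> em c lam mu i j)^2"
  using assms unfolding phi_def qf_def
  by (simp add: field_simps power2_eq_square)

lemma phi_lin:
  "phi \<alpha> \<beta> \<xi> em c pmax (\<lambda>k. lam k + t * dl k) (\<lambda>k l. mu k l + t * dm k l) i j y =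
   phi \<alpha> \<beta> \<xi> em c pmax lam mu i j y + t * ((dl i - dl j) * (\<alpha> i j - \<beta> i j * y) + dm i j * (pmax - y))"
  unfolding phi_def by (simp add: algebra_simps)

lemma quad_bound:
  fixes a w s :: real
  assumes "a > 0"
  shows "- a * w^2 + s * w \<le> s^2 / (4 * a)"
proof -
  have "0 \<le> (2*a*w - s)^2" by simp
  then have "4*a*(- a * w^2 + s * w) \<le> s^2" by (simp add: power2_eq_square algebra_simps)
  then show ?thesis using assms by (simp add: field_simps)
qed

definition links :: "nat \<Rightarrow> (nat \<Rightarrow> nat \<Rightarrow> real) \<Rightarrow> (nat \<Rightarrow> nat \<Rightarrow> real) \<Rightarrow> bool" where
  "links N \<beta> \<xi> \<longleftrightarrow> (\<forall>i\<in>nodes N. \<forall>j\<in>nodes N. i \<noteq> j \<longrightarrow> \<xi> i j > 0 \<and> \<beta> i j > 0)"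

lemma fin_nodes[simp]: "finite (nodes N)" by (simp add: nodes_def)

lemma L_quad:
  assumes "links N \<beta> \<xi>"
  shows "lagrangian N \<alpha> \<beta> \<xi> em c pmax x lam mu =
    lagrangian N \<alpha> \<beta> \<xi> em c pmax (qf \<alpha> \<beta> \<xi> em c lam mu) lam mu
    - (\<Sum>i\<in>nodes N. \<Sum>j\<in>nodes N - {i}. \<xi> i j * \<beta> i j * (x i j - qf \<alpha> \<beta> \<xi> em c lam mu i j)^2)"
proof -
  have "lagrangian N \<alpha> \<beta> \<xi> em c pmax x lam mu =
   (\<Sum>i\<in>nodes N. \<Sum>j\<in>nodes N - {i}. phi \<alpha> \<beta> \<xi> em c pmax lam mu i j (qf \<alpha> \<beta> \<xi> em c lam mu i j)
     - \<xi> i j * \<beta> i j * (x i j - qf \<alpha> \<beta> \<xi> em c lam mu i j)^2)"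
    unfolding L_sep
    by (intro sum.cong refl, rule phi_quad) (use assms in \<open>auto simp: links_def\<close>)
  then show ?thesis by (simp add: L_sep sum_subtractf)
qed

lemma lagr_lin:
  "lagrangian N \<alpha> \<beta> \<xi> em c pmax x (\<lambda>k. lam k + t * dl k) (\<lambda>k l. mu k l + t * dm k l) =
   lagrangian N \<alpha> \<beta> \<xi> em c pmax x lam mu + t * ((\<Sum>i\<in>nodes N. dl i * balance N \<alpha> \<beta> x i)
     + (\<Sum>i\<in>nodes N. \<Sum>j\<in>nodes N - {i}. dm i j * (pmax - x i j)))"
proof -
  have 1: "(\<Sum>i\<in>nodes N. (lam i + t * dl i) * balance N \<alpha> \<beta> x i) =
     (\<Sum>i\<in>nodes N. lam i * balance N \<alpha> \<beta> x i) + t * (\<Sum>i\<in>nodes N. dl i * balance N \<alpha> \<beta> x i)"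
    by (simp add: distrib_right sum.distrib sum_distrib_left mult.assoc)
  have 2: "(\<Sum>i\<in>nodes N. \<Sum>j\<in>nodes N - {i}. (mu i j + t * dm i j) * (pmax - x i j)) =
     (\<Sum>i\<in>nodes N. \<Sum>j\<in>nodes N - {i}. mu i j * (pmax - x i j))
     + t * (\<Sum>i\<in>nodes N. \<Sum>j\<in>nodes N - {i}. dm i j * (pmax - x i j))"
    by (simp add: distrib_right sum.distrib sum_distrib_left mult.assoc)
  show ?thesis unfolding lagrangian_def 1 2 by (simp add: algebra_simps)
qed

lemma T_sum:
  "(\<Sum>i\<in>nodes N. \<Sum>j\<in>nodes N - {i}. (dl i - dl j) * (\<alpha> i j - \<beta> i j * x i j) + dm i j * (pmax - x i j))
   = (\<Sum>i\<in>nodes N. dl i * balance N \<alpha> \<beta> x i)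
     + (\<Sum>i\<in>nodes N. \<Sum>j\<in>nodes N - {i}. dm i j * (pmax - x i j))"
proof -
  have "lagrangian N \<alpha> \<beta> \<xi> em c pmax x (\<lambda>k. lam k + 1 * dl k) (\<lambda>k l. mu k l + 1 * dm k l) =
    lagrangian N \<alpha> \<beta> \<xi> em c pmax x lam mu +
    (\<Sum>i\<in>nodes N. \<Sum>j\<in>nodes N - {i}. (dl i - dl j) * (\<alpha> i j - \<beta> i j * x i j) + dm i j * (pmax - x i j))"
    unfolding L_sep phi_lin by (simp add: sum.distrib)
  then show ?thesis using lagr_lin[of N \<alpha> \<beta> \<xi> em c pmax x lam 1 dl mu dm] by simp
qed

lemma L_pert_bound:
  assumes "links N \<beta> \<xi>"
  shows "lagrangian N \<alpha> \<beta> \<xi> em c pmax x (\<lambda>k. lam k + t * dl k) (\<lambda>k l. mu k l + t * dm k l)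
    \<le> lagrangian N \<alpha> \<beta> \<xi> em c pmax (qf \<alpha> \<beta> \<xi> em c lam mu) lam mu
      + t * ((\<Sum>i\<in>nodes N. dl i * balance N \<alpha> \<beta> (qf \<alpha> \<beta> \<xi> em c lam mu) i)
     + (\<Sum>i\<in>nodes N. \<Sum>j\<in>nodes N - {i}. dm i j * (pmax - qf \<alpha> \<beta> \<xi> em c lam mu i j)))
      + t^2 * (\<Sum>i\<in>nodes N. \<Sum>j\<in>nodes N - {i}. (- (dl i - dl j) * \<beta> i j - dm i j)^2 / (4 * (\<xi> i j * \<beta> i j)))"
proof -
  let ?q = "qf \<alpha> \<beta> \<xi> em c lam mu"
  let ?T = "\<lambda>i j. (dl i - dl j) * (\<alpha> i j - \<beta> i j * ?q i j) + dm i j * (pmax - ?q i j)"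
  let ?s = "\<lambda>i j. (- (dl i - dl j) * \<beta> i j - dm i j)"
  have "lagrangian N \<alpha> \<beta> \<xi> em c pmax x (\<lambda>k. lam k + t * dl k) (\<lambda>k l. mu k l + t * dm k l)
     \<le> (\<Sum>i\<in>nodes N. \<Sum>j\<in>nodes N - {i}. phi \<alpha> \<beta> \<xi> em c pmax lam mu i j (?q i j) + t * ?T i j
         + t^2 * (?s i j ^2 / (4 * (\<xi> i j * \<beta> i j))))"
    unfolding L_sep phi_lin
  proof (intro sum_mono)
    fix i j assume ij: "i \<in> nodes N" "j \<in> nodes N - {i}"
    then have a: "\<xi> i j * \<beta> i j > 0" using assms by (auto simp: links_def)
    have e: "phi \<alpha> \<beta> \<xi> em c pmax lam mu i j (x i j) = phi \<alpha> \<beta> \<xi> em c pmax lam mu i j (?q i j)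
     - \<xi> i j * \<beta> i j * (x i j - ?q i j)^2"
      by (rule phi_quad) (use assms ij in \<open>auto simp: links_def\<close>)
    have e2: "t * ((dl i - dl j) * (\<alpha> i j - \<beta> i j * x i j) + dm i j * (pmax - x i j))
       = t * ?T i j + (t * ?s i j) * (x i j - ?q i j)"
      by (simp add: algebra_simps)
    have qb: "- (\<xi> i j * \<beta> i j) * (x i j - ?q i j)^2 + (t * ?s i j) * (x i j - ?q i j)
       \<le> (t * ?s i j)^2 / (4 * (\<xi> i j * \<beta> i j))"
      by (rule quad_bound[OF a])
    show "phi \<alpha> \<beta> \<xi> em c pmax lam mu i j (x i j) +
         t * ((dl i - dl j) * (\<alpha> i j - \<beta> i j * x i j) + dm i j * (pmax - x i j))
         \<le> phi \<alpha> \<beta> \<xi> em c pmax lam mu i j (?q i j) + t * ?T i j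
         + t^2 * (?s i j ^2 / (4 * (\<xi> i j * \<beta> i j)))"
      unfolding e e2 using qb by (simp add: power_mult_distrib)
  qed
  also have "\<dots> = (\<Sum>i\<in>nodes N. \<Sum>j\<in>nodes N - {i}. phi \<alpha> \<beta> \<xi> em c pmax lam mu i j (?q i j))
     + t * (\<Sum>i\<in>nodes N. \<Sum>j\<in>nodes N - {i}. ?T i j)
     + t^2 * (\<Sum>i\<in>nodes N. \<Sum>j\<in>nodes N - {i}. ?s i j ^2 / (4 * (\<xi> i j * \<beta> i j)))"
  proof -
    have a: "\<And>i. (\<Sum>j\<in>nodes N - {i}. t * ?T i j) = t * (\<Sum>j\<in>nodes N - {i}. ?T i j)"
      by (simp only: sum_distrib_left)
    have b: "\<And>i. (\<Sum>j\<in>nodes N - {i}. t^2 * (?s i j ^2 / (4 * (\<xi> i j * \<beta> i j))))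
       = t^2 * (\<Sum>j\<in>nodes N - {i}. ?s i j ^2 / (4 * (\<xi> i j * \<beta> i j)))"
      by (simp only: sum_distrib_left)
    show ?thesis by (simp only: sum.distrib a b sum_distrib_left[symmetric])
  qed
  finally show ?thesis unfolding T_sum L_sep[symmetric] .
qed

lemma dual_lower:
  assumes "links N \<beta> \<xi>"
  shows "lagrangian N \<alpha> \<beta> \<xi> em c pmax (qf \<alpha> \<beta> \<xi> em c lam mu) lam mu
     \<le> dual_fun N \<alpha> \<beta> \<xi> em c pmax lam mu"
proof -
  have le: "lagrangian N \<alpha> \<beta> \<xi> em c pmax x lam mu \<le>
     lagrangian N \<alpha> \<beta> \<xi> em c pmax (qf \<alpha> \<beta> \<xi> em c lam mu) lam mu" for x
  proof -
    have "0 \<le> (\<Sum>i\<in>nodes N. \<Sum>j\<in>nodes N - {i}. \<xi> i j * \<beta> i j * (x i j - qf \<alpha> \<beta> \<xi> em c lam mu i j)^2)"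
    proof (intro sum_nonneg)
      fix i j assume "i \<in> nodes N" "j \<in> nodes N - {i}"
      then have "\<xi> i j > 0" "\<beta> i j > 0" using assms by (auto simp: links_def)
      then show "0 \<le> \<xi> i j * \<beta> i j * (x i j - qf \<alpha> \<beta> \<xi> em c lam mu i j)^2" by simp
    qed
    then show ?thesis using L_quad[OF assms, of \<alpha> em c pmax x lam mu] by linarith
  qed
  show ?thesis unfolding dual_fun_def
    by (rule cSUP_upper) (use le in \<open>auto intro!: bdd_aboveI2\<close>)
qed

lemma dual_upper:
  assumes "links N \<beta> \<xi>"
  shows "dual_fun N \<alpha> \<beta> \<xi> em c pmax (\<lambda>k. lam k + t * dl k) (\<lambda>k l. mu k l + t * dm k l)
    \<le> lagrangian N \<alpha> \<beta> \<xi> em c pmax (qf \<alpha> \<beta> \<xi> em c lam mu) lam mu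
      + t * ((\<Sum>i\<in>nodes N. dl i * balance N \<alpha> \<beta> (qf \<alpha> \<beta> \<xi> em c lam mu) i)
     + (\<Sum>i\<in>nodes N. \<Sum>j\<in>nodes N - {i}. dm i j * (pmax - qf \<alpha> \<beta> \<xi> em c lam mu i j)))
      + t^2 * (\<Sum>i\<in>nodes N. \<Sum>j\<in>nodes N - {i}. (- (dl i - dl j) * \<beta> i j - dm i j)^2 / (4 * (\<xi> i j * \<beta> i j)))"
  unfolding dual_fun_def
  apply (rule cSUP_least)
   apply simp
  apply (rule L_pert_bound[OF assms])
  done

lemma S_nonneg:
  assumes lk: "links N \<beta> \<xi>"
    and opt: "dual_optimal N \<alpha> \<beta> \<xi> em c pmax lam mu"
    and dm: "\<And>i j. i \<in> nodes N \<Longrightarrow> j \<in> nodes N \<Longrightarrow> i \<noteq> j \<Longrightarrow> dm i j \<ge> 0"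
  shows "0 \<le> (\<Sum>i\<in>nodes N. dl i * balance N \<alpha> \<beta> (qf \<alpha> \<beta> \<xi> em c lam mu) i)
     + (\<Sum>i\<in>nodes N. \<Sum>j\<in>nodes N - {i}. dm i j * (pmax - qf \<alpha> \<beta> \<xi> em c lam mu i j))"
    (is "0 \<le> ?S")
proof (rule ccontr)
  assume neg: "\<not> 0 \<le> ?S"
  define C where "C = (\<Sum>i\<in>nodes N. \<Sum>j\<in>nodes N - {i}. (- (dl i - dl j) * \<beta> i j - dm i j)^2 / (4 * (\<xi> i j * \<beta> i j)))"
  have C0: "C \<ge> 0" unfolding C_def
  proof (intro sum_nonneg)
    fix i j assume "i \<in> nodes N" "j \<in> nodes N - {i}"
    then have "\<xi> i j > 0" "\<beta> i j > 0" using lk by (auto simp: links_def)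
    then show "0 \<le> (- (dl i - dl j) * \<beta> i j - dm i j)^2 / (4 * (\<xi> i j * \<beta> i j))" by simp
  qed
  define t where "t = - ?S / (C + 1)"
  have t0: "t > 0" unfolding t_def using neg C0 by (auto intro: divide_pos_pos)
  have feas: "dual_feasible N (\<lambda>k l. mu k l + t * dm k l)"
    using opt dm t0 unfolding dual_optimal_def dual_feasible_def by (auto intro: add_nonneg_nonneg)
  have "dual_fun N \<alpha> \<beta> \<xi> em c pmax lam mu \<le> dual_fun N \<alpha> \<beta> \<xi> em c pmax (\<lambda>k. lam k + t * dl k) (\<lambda>k l. mu k l + t * dm k l)"
    using opt feas unfolding dual_optimal_def by blast
  then have "0 \<le> t * ?S + t^2 * C"
    using dual_upper[OF lk, of \<alpha> em c pmax lam t dl mu dm] dual_lower[OF lk, of \<alpha> em c pmax lam mu]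
    unfolding C_def by linarith
  then have "0 \<le> t * (?S + t * C)" by (simp add: power2_eq_square algebra_simps)
  then have h: "0 \<le> ?S + t * C" using t0 by (simp add: zero_le_mult_iff)
  have "?S + t * C = ?S / (C + 1)" unfolding t_def using C0 by (simp add: field_simps)
  also have "\<dots> < 0" using neg C0 by (simp add: divide_neg_pos)
  finally show False using h by simp
qed

lemma q_props:
  assumes lk: "links N \<beta> \<xi>"
    and opt: "dual_optimal N \<alpha> \<beta> \<xi> em c pmax lam mu"
  shows "\<forall>m\<in>nodes N. balance N \<alpha> \<beta> (qf \<alpha> \<beta> \<xi> em c lam mu) m = 0"
    and "\<forall>a\<in>nodes N. \<forall>b\<in>nodes N. a \<noteq> b \<longrightarrow> qf \<alpha> \<beta> \<xi> em c lam mu a b \<le> pmax"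
proof -
  let ?q = "qf \<alpha> \<beta> \<xi> em c lam mu"
  show "\<forall>m\<in>nodes N. balance N \<alpha> \<beta> ?q m = 0"
  proof
    fix m assume m: "m \<in> nodes N"
    have 1: "0 \<le> (\<Sum>i\<in>nodes N. (if i = m then s else 0) * balance N \<alpha> \<beta> ?q i)
     + (\<Sum>i\<in>nodes N. \<Sum>j\<in>nodes N - {i}. 0 * (pmax - ?q i j))" for s
      by (rule S_nonneg[OF lk opt]) auto
    have 2: "(\<Sum>i\<in>nodes N. (if i = m then s else 0) * balance N \<alpha> \<beta> ?q i) = s * balance N \<alpha> \<beta> ?q m" for s
    proof -
      have "(\<Sum>i\<in>nodes N. (if i = m then s else 0) * balance N \<alpha> \<beta> ?q i)
          = (\<Sum>i\<in>nodes N. if i = m then s * balance N \<alpha> \<beta> ?q i else 0)"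
        by (intro sum.cong) auto
      then show ?thesis using m by simp
    qed
    show "balance N \<alpha> \<beta> ?q m = 0" using 1[of 1] 1[of "-1"] unfolding 2 by simp
  qed
  show "\<forall>a\<in>nodes N. \<forall>b\<in>nodes N. a \<noteq> b \<longrightarrow> ?q a b \<le> pmax"
  proof (intro ballI impI)
    fix a b assume ab: "a \<in> nodes N" "b \<in> nodes N" "a \<noteq> b"
    have 1: "0 \<le> (\<Sum>i\<in>nodes N. 0 * balance N \<alpha> \<beta> ?q i)
     + (\<Sum>i\<in>nodes N. \<Sum>j\<in>nodes N - {i}. (if i = a \<and> j = b then 1 else 0) * (pmax - ?q i j))"
      by (rule S_nonneg[OF lk opt]) auto
    have 2: "(\<Sum>i\<in>nodes N. \<Sum>j\<in>nodes N - {i}. (if i = a \<and> j = b then 1 else 0) * (pmax - ?q i j))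
       = (\<Sum>i\<in>nodes N. if i = a then (\<Sum>j\<in>nodes N - {i}. (if j = b then pmax - ?q i j else 0)) else 0)"
    proof (intro sum.cong refl)
      fix i assume "i \<in> nodes N"
      show "(\<Sum>j\<in>nodes N - {i}. (if i = a \<and> j = b then 1 else 0) * (pmax - ?q i j))
         = (if i = a then (\<Sum>j\<in>nodes N - {i}. (if j = b then pmax - ?q i j else 0)) else 0)"
      proof (cases "i = a")
        case True
        have "(\<Sum>j\<in>nodes N - {a}. (if a = a \<and> j = b then 1 else 0) * (pmax - ?q a j))
          = (\<Sum>j\<in>nodes N - {a}. (if j = b then pmax - ?q a j else 0))"
          by (rule sum.cong) auto
        then show ?thesis using True by simp
      qed simp
    qed
    also have "\<dots> = (\<Sum>j\<in>nodes N - {a}. (if j = b then pmax - ?q a j else 0))"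
      by (simp only: sum.delta fin_nodes ab(1) if_True)
    also have "\<dots> = pmax - ?q a b"
      by (simp only: sum.delta finite_Diff fin_nodes) (use ab in auto)
    finally show "?q a b \<le> pmax" using 1 by simp
  qed
qed

lemma p_eq_q:
  assumes lk: "links N \<beta> \<xi>"
    and popt: "primal_optimal N \<alpha> \<beta> \<xi> em c pmax p"
    and opt: "dual_optimal N \<alpha> \<beta> \<xi> em c pmax lam mu"
    and mu0: "\<And>i j. i \<in> nodes N \<Longrightarrow> j \<in> nodes N \<Longrightarrow> i \<noteq> j \<Longrightarrow> mu i j = 0"
    and ij: "i \<in> nodes N" "j \<in> nodes N" "i \<noteq> j"
  shows "p i j = qf \<alpha> \<beta> \<xi> em c lam mu i j"
proof -
  let ?q = "qf \<alpha> \<beta> \<xi> em c lam mu"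
  have objL: "objective N \<alpha> \<beta> \<xi> em c x = lagrangian N \<alpha> \<beta> \<xi> em c pmax x lam mu"
    if "feasible N \<alpha> \<beta> pmax x" for x
    using that mu0 unfolding lagrangian_def feasible_def by simp
  have qfeas: "feasible N \<alpha> \<beta> pmax ?q" using q_props[OF lk opt] unfolding feasible_def by blast
  have pfeas: "feasible N \<alpha> \<beta> pmax p" using popt unfolding primal_optimal_def by blast
  have "objective N \<alpha> \<beta> \<xi> em c ?q \<le> objective N \<alpha> \<beta> \<xi> em c p"
    using popt qfeas unfolding primal_optimal_def by blast
  then have le: "(\<Sum>i\<in>nodes N. \<Sum>j\<in>nodes N - {i}. \<xi> i j * \<beta> i j * (p i j - ?q i j)^2) \<le> 0"
    using objL[OF qfeas] objL[OF pfeas] L_quad[OF lk, of \<alpha> em c pmax p lam mu] by linarith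
  have nn: "\<And>i j. i \<in> nodes N \<Longrightarrow> j \<in> nodes N - {i} \<Longrightarrow> 0 \<le> \<xi> i j * \<beta> i j * (p i j - ?q i j)^2"
  proof -
    fix i j assume "i \<in> nodes N" "j \<in> nodes N - {i}"
    then have "\<xi> i j > 0" "\<beta> i j > 0" using lk by (auto simp: links_def)
    then show "0 \<le> \<xi> i j * \<beta> i j * (p i j - ?q i j)^2" by simp
  qed
  have nn2: "\<And>i. i \<in> nodes N \<Longrightarrow> 0 \<le> (\<Sum>j\<in>nodes N - {i}. \<xi> i j * \<beta> i j * (p i j - ?q i j)^2)"
    using nn by (intro sum_nonneg) auto
  have "(\<Sum>i\<in>nodes N. \<Sum>j\<in>nodes N - {i}. \<xi> i j * \<beta> i j * (p i j - ?q i j)^2) = 0"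
    using le nn2 sum_nonneg[of "nodes N"] by (meson antisym)
  then have "\<forall>i\<in>nodes N. (\<Sum>j\<in>nodes N - {i}. \<xi> i j * \<beta> i j * (p i j - ?q i j)^2) = 0"
    by (subst (asm) sum_nonneg_eq_0_iff[OF fin_nodes]) (use nn2 in auto)
  then have "(\<Sum>j\<in>nodes N - {i}. \<xi> i j * \<beta> i j * (p i j - ?q i j)^2) = 0"
    using ij by auto
  then have "\<forall>j\<in>nodes N - {i}. \<xi> i j * \<beta> i j * (p i j - ?q i j)^2 = 0"
    by (subst (asm) sum_nonneg_eq_0_iff) (use nn ij in auto)
  then have "\<xi> i j * \<beta> i j * (p i j - ?q i j)^2 = 0"
    using ij by auto
  moreover have "\<xi> i j > 0" "\<beta> i j > 0" using lk ij by (auto simp: links_def)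
  ultimately show ?thesis by simp
qed



definition lap :: "nat set \<Rightarrow> (nat \<Rightarrow> nat \<Rightarrow> real) \<Rightarrow> (nat \<Rightarrow> real) \<Rightarrow> nat \<Rightarrow> real" where
  "lap V g u k = (\<Sum>l\<in>V - {k}. g k l * (u k - u l))"

lemma lap_full: "finite V \<Longrightarrow> lap V g u k = (\<Sum>l\<in>V. g k l * (u k - u l))"
  unfolding lap_def by (simp add: sum_diff1)

lemma delta_sum:
  assumes "finite V" "a \<in> V" "b \<in> V"
  shows "(\<Sum>m\<in>V. f m * ((if m = a then 1 else 0) - (if m = b then 1 else 0))) = f a - (f b :: real)"
proof -
  have "(\<Sum>m\<in>V. f m * ((if m = a then 1 else 0) - (if m = b then 1 else 0)))
     = (\<Sum>m\<in>V. (if m = a then f m else 0) - (if m = b then f m else 0))"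
    by (intro sum.cong) auto
  also have "\<dots> = f a - f b" using assms by (simp add: sum_subtractf)
  finally show ?thesis .
qed

lemma lap_exists:
  assumes "finite V"
    and "\<forall>k\<in>V. \<forall>l\<in>V. g k l = g l k"
    and "\<forall>k\<in>V. \<forall>l\<in>V. k \<noteq> l \<longrightarrow> g k l > 0"
    and "(\<Sum>k\<in>V. b k) = 0"
  shows "\<exists>u. \<forall>k\<in>V. lap V g u k = b k"
  using assms
proof (induction V arbitrary: g b rule: finite_induct)
  case empty
  then show ?case by simp
next
  case (insert n W)
  show ?case
  proof (cases "W = {}")
    case True
    then show ?thesis using insert.prems(3) by (auto simp: lap_def)
  next
    case False
    define G where "G = (\<Sum>l\<in>W. g n l)"
    have G0: "G > 0" unfolding G_def using False insert.prems(2) insert.hyps by (intro sum_pos) auto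
    define g' where "g' k l = g k l + g k n * g n l / G" for k l
    define b' where "b' k = b k + g k n * b n / G" for k
    have sym': "\<forall>k\<in>W. \<forall>l\<in>W. g' k l = g' l k"
    proof (intro ballI)
      fix k l assume kl: "k \<in> W" "l \<in> W"
      have "g k l = g l k" "g k n = g n k" "g n l = g l n" using insert.prems(1) kl by blast+
      then show "g' k l = g' l k" unfolding g'_def by (simp add: mult.commute)
    qed
    have pos': "\<forall>k\<in>W. \<forall>l\<in>W. k \<noteq> l \<longrightarrow> g' k l > 0" unfolding g'_def using insert.prems(2) insert.hyps G0
      by (auto intro!: add_pos_pos divide_pos_pos mult_pos_pos)
    have "(\<Sum>k\<in>W. g k n) = G" unfolding G_def
    proof (intro sum.cong refl)
      fix k assume "k \<in> W" then show "g k n = g n k" using insert.prems(1) by blast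
    qed
    then have "(\<Sum>k\<in>W. b' k) = (\<Sum>k\<in>W. b k) + b n"
      unfolding b'_def using G0 by (simp add: sum.distrib sum_divide_distrib[symmetric] sum_distrib_right[symmetric])
    also have "\<dots> = 0" using insert.prems(3) insert.hyps by (simp add: add.commute)
    finally have sb: "(\<Sum>k\<in>W. b' k) = 0" .
    obtain u where u: "\<forall>k\<in>W. lap W g' u k = b' k"
      using insert.IH[OF sym' pos' sb] by blast
    define P where "P = (\<Sum>l\<in>W. g n l * u l)"
    define u' where "u' = u(n := (b n + P) / G)"
    have u'W: "\<And>l. l \<in> W \<Longrightarrow> u' l = u l" unfolding u'_def using insert.hyps by auto
    have u'n: "u' n = (b n + P) / G" unfolding u'_def by simp
    show ?thesis
    proof (intro exI ballI)
      fix k assume k: "k \<in> insert n W"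
      show "lap (insert n W) g u' k = b k"
      proof (cases "k = n")
        case True
        have "lap (insert n W) g u' k = (\<Sum>l\<in>W. g n l * (u' n - u l))"
          unfolding lap_def True using insert.hyps u'W by (intro sum.cong) auto
        also have "\<dots> = G * u' n - P"
          unfolding G_def P_def by (simp add: algebra_simps sum_subtractf sum_distrib_right sum_distrib_left)
        also have "\<dots> = b k" using G0 True unfolding u'n by (simp add: field_simps)
        finally show ?thesis .
      next
        case False
        then have kW: "k \<in> W" using k by auto
        have e1: "insert n W - {k} = insert n (W - {k})" using False by auto
        have "lap (insert n W) g u' k = g k n * (u k - u' n) + (\<Sum>l\<in>W - {k}. g k l * (u k - u l))"
          unfolding lap_def e1 using insert.hyps kW u'W
          by (subst sum.insert) (auto intro!: sum.cong)
        moreover have "b' k = (\<Sum>l\<in>W - {k}. g k l * (u k - u l))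
            + g k n / G * (\<Sum>l\<in>W - {k}. g n l * (u k - u l))"
        proof -
          have "lap W g' u k = (\<Sum>l\<in>W - {k}. g k l * (u k - u l) + g k n / G * (g n l * (u k - u l)))"
            unfolding lap_def g'_def
            by (intro sum.cong refl) (simp add: divide_inverse algebra_simps)
          then have "b' k = (\<Sum>l\<in>W - {k}. g k l * (u k - u l) + g k n / G * (g n l * (u k - u l)))"
            using u kW by simp
          then show ?thesis by (simp only: sum.distrib sum_distrib_left)
        qed
        moreover have "(\<Sum>l\<in>W - {k}. g n l * (u k - u l)) = G * u k - P"
        proof -
          have "(\<Sum>l\<in>W - {k}. g n l * (u k - u l)) = (\<Sum>l\<in>W. g n l * (u k - u l))"
            using kW insert.hyps by (simp add: sum_diff1)
          also have "\<dots> = G * u k - P" unfolding G_def P_def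
            by (simp add: algebra_simps sum_subtractf sum_distrib_right sum_distrib_left)
          finally show ?thesis .
        qed
        ultimately show ?thesis
        proof -
          define S1 where "S1 = (\<Sum>l\<in>W - {k}. g k l * (u k - u l))"
          define S2 where "S2 = (\<Sum>l\<in>W - {k}. g n l * (u k - u l))"
          assume L: "lap (insert n W) g u' k = g k n * (u k - u' n) + (\<Sum>l\<in>W - {k}. g k l * (u k - u l))"
            and B: "b' k = (\<Sum>l\<in>W - {k}. g k l * (u k - u l)) + g k n / G * (\<Sum>l\<in>W - {k}. g n l * (u k - u l))"
            and S: "(\<Sum>l\<in>W - {k}. g n l * (u k - u l)) = G * u k - P"
          have L': "lap (insert n W) g u' k = g k n * (u k - (b n + P) / G) + S1" using L unfolding S1_def u'n .
          have B': "b k + g k n * b n / G = S1 + g k n / G * (G * u k - P)"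
            using B S unfolding S1_def b'_def by simp
          show ?thesis unfolding L' using B' G0 by (simp add: field_simps)
        qed
      qed
    qed
  qed
qed




lemma lap_const:
  assumes "finite V"
    and "\<forall>k\<in>V. \<forall>l\<in>V. k \<noteq> l \<longrightarrow> g k l > 0"
    and h: "\<forall>k\<in>V. lap V g d k = 0" and "a \<in> V" "b \<in> V"
  shows "d a = d b"
proof -
  have ne: "V \<noteq> {}" using assms by auto
  have "Max (d ` V) \<in> d ` V" using assms(1) ne by simp
  then obtain m where m: "m \<in> V" "d m = Max (d ` V)" by auto
  have mx: "\<And>l. l \<in> V \<Longrightarrow> d l \<le> d m" using m assms(1) by simp
  have nn: "\<And>l. l \<in> V - {m} \<Longrightarrow> 0 \<le> g m l * (d m - d l)"
  proof -
    fix l assume l: "l \<in> V - {m}"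
    then have "g m l > 0" using assms(2) m by auto
    moreover have "d l \<le> d m" using mx l by auto
    ultimately show "0 \<le> g m l * (d m - d l)" by simp
  qed
  have "(\<Sum>l\<in>V - {m}. g m l * (d m - d l)) = 0" using h m unfolding lap_def by auto
  then have z: "\<forall>l\<in>V - {m}. g m l * (d m - d l) = 0"
    by (subst (asm) sum_nonneg_eq_0_iff) (use nn assms(1) in auto)
  have "\<And>l. l \<in> V \<Longrightarrow> d l = d m"
  proof -
    fix l assume l: "l \<in> V"
    show "d l = d m"
    proof (cases "l = m")
      case False
      then have "g m l > 0" using assms(2) m l by auto
      then show ?thesis using z l False by force
    qed simp
  qed
  then show ?thesis using assms by auto
qed

lemma eff_res_eq:
  assumes "finite V"
    and pos: "\<forall>k\<in>V. \<forall>l\<in>V. k \<noteq> l \<longrightarrow> g k l > 0"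
    and "a \<in> V" "b \<in> V"
    and u: "\<forall>k\<in>V. lap V g u k = (if k = a then 1 else 0) - (if k = b then 1 else 0)"
  shows "eff_res V g a b = u a - u b"
  unfolding eff_res_def
proof (rule the_equality)
  show "\<exists>u'. (\<forall>k\<in>V. (\<Sum>l\<in>V - {k}. g k l * (u' k - u' l)) =
         (if k = a then 1 else 0) - (if k = b then 1 else 0)) \<and> u a - u b = u' a - u' b"
    using u unfolding lap_def by blast
next
  fix r assume "\<exists>u'. (\<forall>k\<in>V. (\<Sum>l\<in>V - {k}. g k l * (u' k - u' l)) =
         (if k = a then 1 else 0) - (if k = b then 1 else 0)) \<and> r = u' a - u' b"
  then obtain u' where u': "\<forall>k\<in>V. lap V g u' k = (if k = a then 1 else 0) - (if k = b then 1 else 0)"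
    and r: "r = u' a - u' b" unfolding lap_def by blast
  have "\<forall>k\<in>V. lap V g (\<lambda>m. u m - u' m) k = 0"
  proof
    fix k assume k: "k \<in> V"
    have "lap V g (\<lambda>m. u m - u' m) k = lap V g u k - lap V g u' k"
      unfolding lap_def by (simp add: sum_subtractf[symmetric] algebra_simps)
    then show "lap V g (\<lambda>m. u m - u' m) k = 0" using u u' k by simp
  qed
  then have "u a - u' a = u b - u' b"
    using lap_const[OF assms(1) pos, of "\<lambda>m. u m - u' m" a b] assms by blast
  then show "r = u a - u b" using r by simp
qed

lemma lap_sym:
  assumes "finite V" and sym: "\<forall>k\<in>V. \<forall>l\<in>V. g k l = g l k"
  shows "(\<Sum>k\<in>V. y k * lap V g z k) = (\<Sum>k\<in>V. z k * lap V g y k)"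
proof -
  have A: "(\<Sum>k\<in>V. y k * lap V g z k) =
     (\<Sum>k\<in>V. \<Sum>l\<in>V. g k l * y k * z k) - (\<Sum>k\<in>V. \<Sum>l\<in>V. g k l * y k * z l)" for y z
    unfolding lap_full[OF assms(1)]
    by (simp add: sum_distrib_left sum_subtractf[symmetric] algebra_simps)
  have B: "(\<Sum>k\<in>V. \<Sum>l\<in>V. g k l * y k * z l) = (\<Sum>k\<in>V. \<Sum>l\<in>V. g k l * z k * y l)"
  proof -
    have "(\<Sum>k\<in>V. \<Sum>l\<in>V. g k l * y k * z l) = (\<Sum>l\<in>V. \<Sum>k\<in>V. g k l * y k * z l)"
      by (rule sum.swap)
    also have "\<dots> = (\<Sum>l\<in>V. \<Sum>k\<in>V. g l k * z l * y k)"
      using sym by (intro sum.cong refl) (auto simp: mult.commute mult.left_commute)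
    finally show ?thesis .
  qed
  have C: "(\<Sum>k\<in>V. \<Sum>l\<in>V. g k l * y k * z k) = (\<Sum>k\<in>V. \<Sum>l\<in>V. g k l * z k * y k)"
    by (simp add: mult.commute mult.left_commute)
  show ?thesis unfolding A[of y z] A[of z y] B C ..
qed

lemma resistance_formula:
  assumes fin: "finite V" and sym: "\<forall>k\<in>V. \<forall>l\<in>V. g k l = g l k"
    and pos: "\<forall>k\<in>V. \<forall>l\<in>V. k \<noteq> l \<longrightarrow> g k l > 0"
    and ij: "i \<in> V" "j \<in> V"
    and sv: "(\<Sum>k\<in>V. v k) = 0"
    and hx: "\<forall>k\<in>V. lap V g x k = - v k"
  shows "(\<Sum>k\<in>V. (eff_res V g j k - eff_res V g i k) * v k) = 2 * (x j - x i)"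
proof -
  have s0: "(\<Sum>k\<in>V. (if k = a then 1 else 0) - (if k = b then 1 else 0)) = (0::real)"
    if "a \<in> V" "b \<in> V" for a b
    using that fin by (simp add: sum_subtractf)
  obtain u where u: "\<forall>k\<in>V. lap V g u k = (if k = j then 1 else 0) - (if k = i then 1 else 0)"
    using lap_exists[OF fin sym pos s0[OF ij(2,1)]] by blast
  have R: "eff_res V g j k - eff_res V g i k = u i + u j - 2 * u k" if k: "k \<in> V" for k
  proof -
    obtain z where z: "\<forall>m\<in>V. lap V g z m = (if m = i then 1 else 0) - (if m = k then 1 else 0)"
      using lap_exists[OF fin sym pos s0[OF ij(1) k]] by blast
    have Ri: "eff_res V g i k = z i - z k" by (rule eff_res_eq[OF fin pos ij(1) k z])
    have zu: "\<forall>m\<in>V. lap V g (\<lambda>m. z m + u m) m = (if m = j then 1 else 0) - (if m = k then 1 else 0)"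
    proof
      fix m assume m: "m \<in> V"
      have "lap V g (\<lambda>m. z m + u m) m = lap V g z m + lap V g u m"
        unfolding lap_def by (simp add: sum.distrib[symmetric] algebra_simps)
      then show "lap V g (\<lambda>m. z m + u m) m = (if m = j then 1 else 0) - (if m = k then 1 else 0)"
        using z u m by simp
    qed
    have Rj: "eff_res V g j k = (z j + u j) - (z k + u k)"
      using eff_res_eq[OF fin pos ij(2) k zu] by simp
    have "(\<Sum>m\<in>V. u m * lap V g z m) = (\<Sum>m\<in>V. z m * lap V g u m)" by (rule lap_sym[OF fin sym])
    then have "u i - u k = z j - z i"
      using z u delta_sum[OF fin ij(1) k, of u] delta_sum[OF fin ij(2,1), of z] by simp
    then show ?thesis using Ri Rj by simp
  qed
  have "(\<Sum>k\<in>V. (eff_res V g j k - eff_res V g i k) * v k) = (\<Sum>k\<in>V. (u i + u j) * v k - 2 * (u k * v k))"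
  proof (intro sum.cong refl)
    fix k assume k: "k \<in> V"
    show "(eff_res V g j k - eff_res V g i k) * v k = (u i + u j) * v k - 2 * (u k * v k)"
      by (simp only: R[OF k]) (simp add: algebra_simps)
  qed
  also have "\<dots> = - 2 * (\<Sum>k\<in>V. u k * v k)"
    using sv by (simp add: sum_subtractf sum_distrib_left[symmetric])
  also have "(\<Sum>k\<in>V. u k * v k) = - (\<Sum>k\<in>V. u k * lap V g x k)"
    using hx by (simp add: sum_negf[symmetric])
  also have "(\<Sum>k\<in>V. u k * lap V g x k) = (\<Sum>k\<in>V. x k * lap V g u k)" by (rule lap_sym[OF fin sym])
  also have "\<dots> = x j - x i" using u delta_sum[OF fin ij(2,1), of x] by simp
  finally show ?thesis by simp
qed



lemma res_net_sym: "res_net \<beta> \<xi> k l = res_net \<beta> \<xi> l k"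
  unfolding res_net_def by (simp add: add.commute)

lemma main_general:
  fixes N :: nat and \<alpha> \<beta> \<xi> em :: "nat \<Rightarrow> nat \<Rightarrow> real"
  assumes lk: "links N \<beta> \<xi>"
    and popt: "primal_optimal N \<alpha> \<beta> \<xi> em c pmax p"
    and opt: "dual_optimal N \<alpha> \<beta> \<xi> em c pmax lam mu"
    and mu0: "\<And>i j. i \<in> nodes N \<Longrightarrow> j \<in> nodes N \<Longrightarrow> i \<noteq> j \<Longrightarrow> mu i j = 0"
    and ij: "i \<in> nodes N" "j \<in> nodes N" "i \<noteq> j"
  shows "p i j = (c * \<beta> i j + \<alpha> i j + em i j) / (2 * \<beta> i j)
        + 1 / (4 * \<xi> i j) * (\<Sum>k\<in>nodes N. (R_eff N \<beta> \<xi> j k - R_eff N \<beta> \<xi> i k) *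
           ((\<Sum>j\<in>nodes N - {k}. \<alpha> k j - c * \<beta> k j - em k j)
                  - (\<Sum>j\<in>nodes N - {k}. \<alpha> j k - c * \<beta> j k - em j k)))"
proof -
  let ?q = "qf \<alpha> \<beta> \<xi> em c lam mu"
  let ?V = "nodes N"
  let ?g = "res_net \<beta> \<xi>"
  define A where "A k l = \<alpha> k l - c * \<beta> k l - em k l" for k l
  define v where "v k = (\<Sum>j\<in>?V - {k}. A k j) - (\<Sum>j\<in>?V - {k}. A j k)" for k
  have qval: "?q k l = (c * \<beta> k l + \<alpha> k l + em k l) / (2 * \<beta> k l) + (lam l - lam k) / (2 * \<xi> k l)"
    if "k \<in> ?V" "l \<in> ?V" "k \<noteq> l" for k l
  proof -
    have "\<xi> k l > 0" "\<beta> k l > 0" using lk that by (auto simp: links_def)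
    moreover have "mu k l = 0" using mu0 that by blast
    ultimately show ?thesis unfolding qf_def by (simp add: field_simps)
  qed
  have tm: "(\<alpha> k l - \<beta> k l * ?q k l) - (\<alpha> l k - \<beta> l k * ?q l k)
      = (A k l - A l k) / 2 + ?g k l * (lam k - lam l) / 2"
    if "k \<in> ?V" "l \<in> ?V" "k \<noteq> l" for k l
  proof -
    have "\<xi> k l > 0" "\<beta> k l > 0" "\<xi> l k > 0" "\<beta> l k > 0" using lk that by (auto simp: links_def)
    then show ?thesis unfolding qval[OF that] qval[OF that(2,1) that(3)[symmetric]] A_def res_net_def
      by (simp add: field_simps)
  qed
  have lapx: "lap ?V ?g lam k = - v k" if k: "k \<in> ?V" for k
  proof -
    have "0 = balance N \<alpha> \<beta> ?q k" using q_props(1)[OF lk opt] k by simp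
    also have "\<dots> = (\<Sum>l\<in>?V - {k}. (\<alpha> k l - \<beta> k l * ?q k l) - (\<alpha> l k - \<beta> l k * ?q l k))"
      unfolding balance_def by (simp add: sum_subtractf)
    also have "\<dots> = (\<Sum>l\<in>?V - {k}. (A k l - A l k) / 2 + ?g k l * (lam k - lam l) / 2)"
      using tm k by (intro sum.cong refl) auto
    also have "\<dots> = v k / 2 + lap ?V ?g lam k / 2"
      unfolding v_def lap_def by (simp add: sum.distrib sum_subtractf sum_divide_distrib[symmetric] diff_divide_distrib)
    finally show ?thesis by simp
  qed
  have sv: "(\<Sum>k\<in>?V. v k) = 0"
    unfolding v_def using offdiag_swap[OF fin_nodes, of A N] by (simp add: sum_subtractf)
  have sym: "\<forall>k\<in>?V. \<forall>l\<in>?V. ?g k l = ?g l k" using res_net_sym by blast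
  have pos: "\<forall>k\<in>?V. \<forall>l\<in>?V. k \<noteq> l \<longrightarrow> ?g k l > 0"
  proof (intro ballI impI)
    fix k l assume "k \<in> ?V" "l \<in> ?V" "k \<noteq> l"
    then have "\<xi> k l > 0" "\<beta> k l > 0" "\<xi> l k > 0" "\<beta> l k > 0" using lk by (auto simp: links_def)
    then show "?g k l > 0" unfolding res_net_def by (simp add: add_pos_pos)
  qed
  have RF: "(\<Sum>k\<in>?V. (R_eff N \<beta> \<xi> j k - R_eff N \<beta> \<xi> i k) * v k) = 2 * (lam j - lam i)"
    unfolding R_eff_def using resistance_formula[OF fin_nodes sym pos ij(1,2) sv] lapx by blast
  have "p i j = ?q i j" by (rule p_eq_q[OF lk popt opt mu0 ij])
  also have "\<dots> = (c * \<beta> i j + \<alpha> i j + em i j) / (2 * \<beta> i j)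
        + 1 / (4 * \<xi> i j) * (\<Sum>k\<in>?V. (R_eff N \<beta> \<xi> j k - R_eff N \<beta> \<xi> i k) * v k)"
  proof -
    have "\<xi> i j > 0" using lk ij by (auto simp: links_def)
    then show ?thesis unfolding RF qval[OF ij] by (simp add: field_simps)
  qed
  finally show ?thesis unfolding v_def A_def .
qed

theorem proposition1:
  fixes N :: nat
    and \<alpha> \<beta> \<xi> :: "nat \<Rightarrow> nat \<Rightarrow> real"
    and F :: "nat \<Rightarrow> nat \<Rightarrow> real measure"
    and elo ehi c pmax :: real
    and p :: "nat \<Rightarrow> nat \<Rightarrow> real"
    and lam :: "nat \<Rightarrow> real"
    and mu :: "nat \<Rightarrow> nat \<Rightarrow> real"
  assumes links: "\<And>i j. i \<in> nodes N \<Longrightarrow> j \<in> nodes N \<Longrightarrow> i \<noteq> j \<Longrightarrow>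
        \<alpha> i j > 0 \<and> \<beta> i j > 0 \<and> \<xi> i j > 0 \<and>
        prob_space (F i j) \<and> sets (F i j) = sets borel \<and>
        measure (F i j) {elo..ehi} = 1 \<and>
        integrable (F i j) (\<lambda>x. x) \<and> (\<integral>x. x \<partial>(F i j)) = 0"
    and c_pos: "c > 0"
    and pmax_gt: "pmax > c"
    and p_opt: "primal_optimal N \<alpha> \<beta> \<xi> (\<lambda>i j. eps_minus (F i j) elo) c pmax p"
    and dual_opt: "dual_optimal N \<alpha> \<beta> \<xi> (\<lambda>i j. eps_minus (F i j) elo) c pmax lam mu"
    and mu_zero: "\<And>i j. i \<in> nodes N \<Longrightarrow> j \<in> nodes N \<Longrightarrow> i \<noteq> j \<Longrightarrow> mu i j = 0"
  shows "\<forall>i\<in>nodes N. \<forall>j\<in>nodes N. i \<noteq> j \<longrightarrow>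
     (let em = (\<lambda>i j. eps_minus (F i j) elo);
          v = (\<lambda>k. (\<Sum>j\<in>nodes N - {k}. \<alpha> k j - c * \<beta> k j - em k j)
                  - (\<Sum>j\<in>nodes N - {k}. \<alpha> j k - c * \<beta> j k - em j k))
      in p i j = (c * \<beta> i j + \<alpha> i j + em i j) / (2 * \<beta> i j)
               + 1 / (4 * \<xi> i j) * (\<Sum>k\<in>nodes N. (R_eff N \<beta> \<xi> j k - R_eff N \<beta> \<xi> i k) * v k))"
proof (intro ballI impI)
  fix i j assume ij: "i \<in> nodes N" "j \<in> nodes N" "i \<noteq> j"
  have lk: "links N \<beta> \<xi>" unfolding links_def using links by blast
  show "let em = (\<lambda>i j. eps_minus (F i j) elo);
          v = (\<lambda>k. (\<Sum>j\<in>nodes N - {k}. \<alpha> k j - c * \<beta> k j - em k j)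
                  - (\<Sum>j\<in>nodes N - {k}. \<alpha> j k - c * \<beta> j k - em j k))
      in p i j = (c * \<beta> i j + \<alpha> i j + em i j) / (2 * \<beta> i j)
               + 1 / (4 * \<xi> i j) * (\<Sum>k\<in>nodes N. (R_eff N \<beta> \<xi> j k - R_eff N \<beta> \<xi> i k) * v k)"
    unfolding Let_def by (rule main_general[OF lk p_opt dual_opt mu_zero ij])
qed

end
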